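(* Let $\Gamma$ be a finitely presented group, $\Gamma = \langle S \mid R\rangle$ with $S$ a finite symmetric generating set and $R$ a finite set of relators (words in $S$), and assume that $\Gamma$ is one-ended. Let $r$ be a real number with $r > \max_{w \in R} \tfrac{|w|}{2}$, where $|w|$ denotes the word length of $w$. Then the Cayley graph of $\Gamma$ with respect to $S$ has connected spheres with constant $r$: for every integer $n \geq 0$, the set $B_{n+r} \cap B_n^{\mathrm{c},\infty}$ is connected.
   Context: For a finitely generated group $\Gamma$ and a finite set $S \subset \Gamma$ with $s \in S \Rightarrow s^{-1} \in S$ generating $\Gamma$, the Cayley graph has vertex set $\Gamma$, with $g,h$ joined by an edge whenever $gs = h$ for some $s \in S$; it carries the graph (word) metric. $B_t$ denotes the ball of radius $t$ centred at the identity element $e$ in this metric. $\Gamma$ is one-ended if, for all large $n$, the complement of $B_n$ in the Cayley graph has exactly one infinite connected component; $B_n^{\mathrm{c},\infty}$ denotes this infinite connected component of the complement $B_n^{\mathrm{c}}$ of $B_n$. A set of vertices is called connected if the subgraph of the Cayley graph induced on it is connected. The Cayley graph has connected spheres with constant $r>0$ if for all $n \geq 0$ the set $B_{n+r} \cap B_n^{\mathrm{c},\infty}$ is connected. *)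

theory Defs
  imports Complex_Main "HOL-Algebra.Group"
begin

definition word_eval :: "('a, 'b) monoid_scheme \<Rightarrow> 'a list \<Rightarrow> 'a" where
  "word_eval G w = foldr (\<lambda>s g. s \<otimes>\<^bsub>G\<^esub> g) w \<one>\<^bsub>G\<^esub>"

inductive word_step :: "('a, 'b) monoid_scheme \<Rightarrow> 'a set \<Rightarrow> 'a list set \<Rightarrow> 'a list \<Rightarrow> 'a list \<Rightarrow> bool"
  for G S R where
  ins_backtrack: "s \<in> S \<Longrightarrow> word_step G S R (u @ v) (u @ [s, inv\<^bsub>G\<^esub> s] @ v)"
| ins_relator: "w \<in> R \<Longrightarrow> word_step G S R (u @ v) (u @ w @ v)"

definition is_presentation :: "('a, 'b) monoid_scheme \<Rightarrow> 'a set \<Rightarrow> 'a list set \<Rightarrow> bool" where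
  "is_presentation G S R \<longleftrightarrow>
     S \<subseteq> carrier G \<and> (\<forall>s\<in>S. inv\<^bsub>G\<^esub> s \<in> S) \<and>
     (\<forall>g\<in>carrier G. \<exists>w. set w \<subseteq> S \<and> word_eval G w = g) \<and>
     (\<forall>w\<in>R. set w \<subseteq> S) \<and>
     (\<forall>w. set w \<subseteq> S \<longrightarrow> (word_eval G w = \<one>\<^bsub>G\<^esub> \<longleftrightarrow> equivclp (word_step G S R) w []))"

definition cayley_adj :: "('a, 'b) monoid_scheme \<Rightarrow> 'a set \<Rightarrow> 'a \<Rightarrow> 'a \<Rightarrow> bool" where
  "cayley_adj G S g h \<longleftrightarrow> g \<in> carrier G \<and> (\<exists>s\<in>S. g \<otimes>\<^bsub>G\<^esub> s = h)"

text \<open>Word length = graph distance from the identity.\<close>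
definition word_length :: "('a, 'b) monoid_scheme \<Rightarrow> 'a set \<Rightarrow> 'a \<Rightarrow> nat" where
  "word_length G S g = (LEAST n. \<exists>w. length w = n \<and> set w \<subseteq> S \<and> word_eval G w = g)"

definition cayley_ball :: "('a, 'b) monoid_scheme \<Rightarrow> 'a set \<Rightarrow> real \<Rightarrow> 'a set" where
  "cayley_ball G S t = {g \<in> carrier G. real (word_length G S g) \<le> t}"

definition induced_adj :: "('a, 'b) monoid_scheme \<Rightarrow> 'a set \<Rightarrow> 'a set \<Rightarrow> 'a \<Rightarrow> 'a \<Rightarrow> bool" where
  "induced_adj G S A x y \<longleftrightarrow> x \<in> A \<and> y \<in> A \<and> (cayley_adj G S x y \<or> cayley_adj G S y x)"

definition connected_vset :: "('a, 'b) monoid_scheme \<Rightarrow> 'a set \<Rightarrow> 'a set \<Rightarrow> bool" where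
  "connected_vset G S A \<longleftrightarrow> (\<forall>x\<in>A. \<forall>y\<in>A. (induced_adj G S A)\<^sup>*\<^sup>* x y)"

definition vcomponents :: "('a, 'b) monoid_scheme \<Rightarrow> 'a set \<Rightarrow> 'a set \<Rightarrow> 'a set set" where
  "vcomponents G S A = {{y. (induced_adj G S A)\<^sup>*\<^sup>* x y} | x. x \<in> A}"

definition one_ended :: "('a, 'b) monoid_scheme \<Rightarrow> 'a set \<Rightarrow> bool" where
  "one_ended G S \<longleftrightarrow> (\<exists>N. \<forall>n\<ge>N. \<exists>!C. C \<in> vcomponents G S (carrier G - cayley_ball G S (real n)) \<and> infinite C)"

definition inf_comp :: "('a, 'b) monoid_scheme \<Rightarrow> 'a set \<Rightarrow> nat \<Rightarrow> 'a set" where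
  "inf_comp G S n = (THE C. C \<in> vcomponents G S (carrier G - cayley_ball G S (real n)) \<and> infinite C)"

end

theory Submission
  imports Defs
begin


lemma adj_sym: "induced_adj G S X x y \<longleftrightarrow> induced_adj G S X y x"
  unfolding induced_adj_def by blast

lemma adj_rt_sym: "(induced_adj G S X)\<^sup>*\<^sup>* a b \<Longrightarrow> (induced_adj G S X)\<^sup>*\<^sup>* b a"
proof (induction rule: rtranclp_induct)
  case base then show ?case by simp
next
  case (step y z) then show ?case
    by (meson adj_sym converse_rtranclp_into_rtranclp)
qed

lemma adj_mono: "X \<subseteq> Y \<Longrightarrow> (induced_adj G S X)\<^sup>*\<^sup>* a b \<Longrightarrow> (induced_adj G S Y)\<^sup>*\<^sup>* a b"
proof -
  assume "X \<subseteq> Y" "(induced_adj G S X)\<^sup>*\<^sup>* a b"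
  moreover have "induced_adj G S X \<le> induced_adj G S Y" using \<open>X \<subseteq> Y\<close>
    unfolding induced_adj_def by auto
  ultimately show ?thesis using rtranclp_mono by blast
qed

lemma word_eval_Nil[simp]: "word_eval G [] = \<one>\<^bsub>G\<^esub>"
  by (simp add: word_eval_def)
lemma word_eval_Cons[simp]: "word_eval G (s # w) = s \<otimes>\<^bsub>G\<^esub> word_eval G w"
  by (simp add: word_eval_def)

context group begin

lemma word_eval_closed: "set w \<subseteq> carrier G \<Longrightarrow> word_eval G w \<in> carrier G"
  by (induction w) auto

lemma word_eval_append: "set u \<subseteq> carrier G \<Longrightarrow> set v \<subseteq> carrier G \<Longrightarrow>
   word_eval G (u @ v) = word_eval G u \<otimes> word_eval G v"
  by (induction u) (auto simp: m_assoc word_eval_closed)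

end

locale cay = group G for G (structure) +
  fixes S :: "'a set" and R :: "'a list set"
  assumes finS: "finite S" and pres: "is_presentation G S R"
begin

abbreviation d where "d \<equiv> word_length G S"

lemma S_carr: "S \<subseteq> carrier G" using pres unfolding is_presentation_def by blast
lemma S_inv: "s \<in> S \<Longrightarrow> inv s \<in> S" using pres unfolding is_presentation_def by blast
lemma gen: "g \<in> carrier G \<Longrightarrow> \<exists>w. set w \<subseteq> S \<and> word_eval G w = g"
  using pres unfolding is_presentation_def by blast
lemma R_S: "w \<in> R \<Longrightarrow> set w \<subseteq> S" using pres unfolding is_presentation_def by blast
lemma pres_eq: "set w \<subseteq> S \<Longrightarrow> word_eval G w = \<one> \<longleftrightarrow> equivclp (word_step G S R) w []"
  using pres unfolding is_presentation_def by blast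

lemma wS_carr: "set w \<subseteq> S \<Longrightarrow> set w \<subseteq> carrier G" using S_carr by blast

lemma d_witness: "g \<in> carrier G \<Longrightarrow> \<exists>w. length w = d g \<and> set w \<subseteq> S \<and> word_eval G w = g"
proof -
  assume g: "g \<in> carrier G"
  then obtain w where "set w \<subseteq> S \<and> word_eval G w = g" using gen by blast
  then have "\<exists>n w. length w = n \<and> set w \<subseteq> S \<and> word_eval G w = g" by blast
  then show ?thesis unfolding word_length_def by (rule LeastI_ex)
qed

lemma d_le: "set w \<subseteq> S \<Longrightarrow> d (word_eval G w) \<le> length w"
  unfolding word_length_def by (rule Least_le) blast

lemma d_one: "d \<one> = 0"
  using d_le[of "[]"] by simp

lemma d_zero: "g \<in> carrier G \<Longrightarrow> d g = 0 \<Longrightarrow> g = \<one>"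
  using d_witness[of g] by auto

lemma d_step: "h \<in> carrier G \<Longrightarrow> s \<in> S \<Longrightarrow> d (h \<otimes> s) \<le> d h + 1"
proof -
  assume h: "h \<in> carrier G" and s: "s \<in> S"
  obtain w where w: "length w = d h" "set w \<subseteq> S" "word_eval G w = h" using d_witness[OF h] by blast
  have "word_eval G (w @ [s]) = h \<otimes> s"
    using w s S_carr by (subst word_eval_append) (auto dest: wS_carr)
  then show ?thesis using d_le[of "w @ [s]"] w s by auto
qed

lemma d_step': "h \<in> carrier G \<Longrightarrow> s \<in> S \<Longrightarrow> d h \<le> d (h \<otimes> s) + 1"
proof -
  assume h: "h \<in> carrier G" and s: "s \<in> S"
  have sc: "s \<in> carrier G" using s S_carr by blast
  have "h = (h \<otimes> s) \<otimes> inv s" using h sc by (simp add: m_assoc)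
  then show ?thesis using d_step[of "h \<otimes> s" "inv s"] h sc S_inv[OF s] by auto
qed

lemma d_word: "h \<in> carrier G \<Longrightarrow> set u \<subseteq> S \<Longrightarrow> d (h \<otimes> word_eval G u) \<le> d h + length u"
proof (induction u arbitrary: h)
  case Nil then show ?case by simp
next
  case (Cons s u)
  have sc: "s \<in> carrier G" using Cons S_carr by auto
  have "h \<otimes> word_eval G (s # u) = (h \<otimes> s) \<otimes> word_eval G u"
    using Cons sc by (simp add: m_assoc word_eval_closed wS_carr)
  moreover have "d ((h \<otimes> s) \<otimes> word_eval G u) \<le> d (h \<otimes> s) + length u"
    using Cons sc by auto
  moreover have "d (h \<otimes> s) \<le> d h + 1" using d_step Cons by auto
  ultimately show ?case by simp
qed

lemma d_word': "h \<in> carrier G \<Longrightarrow> set u \<subseteq> S \<Longrightarrow> d h \<le> d (h \<otimes> word_eval G u) + length u"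
proof (induction u arbitrary: h)
  case Nil then show ?case by simp
next
  case (Cons s u)
  have sc: "s \<in> carrier G" using Cons S_carr by auto
  have "h \<otimes> word_eval G (s # u) = (h \<otimes> s) \<otimes> word_eval G u"
    using Cons sc by (simp add: m_assoc word_eval_closed wS_carr)
  moreover have "d (h \<otimes> s) \<le> d ((h \<otimes> s) \<otimes> word_eval G u) + length u"
    using Cons sc by auto
  moreover have "d h \<le> d (h \<otimes> s) + 1" using d_step' Cons by auto
  ultimately show ?case by simp
qed

lemma d_pred: "g \<in> carrier G \<Longrightarrow> d g = Suc k \<Longrightarrow>
   \<exists>h s. h \<in> carrier G \<and> s \<in> S \<and> d h = k \<and> h \<otimes> s = g"
proof -
  assume g: "g \<in> carrier G" and dg: "d g = Suc k"
  obtain w where w: "length w = Suc k" "set w \<subseteq> S" "word_eval G w = g"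
    using d_witness[OF g] dg by auto
  obtain w' s where ws: "w = w' @ [s]"
    by (metis w(1) length_Suc_conv_rev)
  have s: "s \<in> S" and w'S: "set w' \<subseteq> S" using w ws by auto
  define h where "h = word_eval G w'"
  have hc: "h \<in> carrier G" unfolding h_def using w'S by (simp add: word_eval_closed wS_carr)
  have "word_eval G (w' @ [s]) = h \<otimes> s"
    unfolding h_def using s S_carr w'S by (subst word_eval_append) (auto dest: wS_carr)
  then have hg: "h \<otimes> s = g" using w ws by simp
  have "d h \<le> k" using d_le[OF w'S] w ws unfolding h_def by simp
  moreover have "d g \<le> d h + 1" using d_step[OF hc s] hg by simp
  ultimately show ?thesis using hc s hg dg by (intro exI[of _ h] exI[of _ s]) auto
qed

lemma descent: "g \<in> carrier G \<Longrightarrow> j \<le> d g \<Longrightarrow>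
   \<exists>c\<in>carrier G. d c = j \<and> (induced_adj G S {z\<in>carrier G. j \<le> d z \<and> d z \<le> d g})\<^sup>*\<^sup>* c g"
proof (induction "d g" arbitrary: g)
  case 0 then show ?case by auto
next
  case (Suc k)
  show ?case
  proof (cases "j = d g")
    case True then show ?thesis using Suc by auto
  next
    case False
    then have jk: "j \<le> k" using Suc by auto
    obtain h s where hs: "h \<in> carrier G" "s \<in> S" "d h = k" "h \<otimes> s = g"
      using d_pred[OF Suc(3)] Suc(2) by metis
    obtain c where c: "c \<in> carrier G" "d c = j"
      "(induced_adj G S {z\<in>carrier G. j \<le> d z \<and> d z \<le> d h})\<^sup>*\<^sup>* c h"
      using Suc(1)[of h] hs jk by auto
    have "(induced_adj G S {z\<in>carrier G. j \<le> d z \<and> d z \<le> d g})\<^sup>*\<^sup>* c h"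
      by (rule adj_mono[OF _ c(3)]) (use hs Suc(2) in auto)
    moreover have "induced_adj G S {z\<in>carrier G. j \<le> d z \<and> d z \<le> d g} h g"
      unfolding induced_adj_def cayley_adj_def using hs Suc jk by auto
    ultimately have "(induced_adj G S {z\<in>carrier G. j \<le> d z \<and> d z \<le> d g})\<^sup>*\<^sup>* c g"
      by (meson rtranclp.rtrancl_into_rtrancl)
    then show ?thesis using c by blast
  qed
qed


lemma ball_nat: "cayley_ball G S (real m) = {g\<in>carrier G. d g \<le> m}"
  unfolding cayley_ball_def by simp

lemma finite_ball: "finite {g\<in>carrier G. d g \<le> m}"
proof -
  have "{g\<in>carrier G. d g \<le> m} \<subseteq> word_eval G ` {w. set w \<subseteq> S \<and> length w \<le> m}"
  proof
    fix g assume "g \<in> {g\<in>carrier G. d g \<le> m}"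
    then obtain w where "length w = d g" "set w \<subseteq> S" "word_eval G w = g" "d g \<le> m"
      using d_witness by blast
    then show "g \<in> word_eval G ` {w. set w \<subseteq> S \<and> length w \<le> m}" by auto
  qed
  then show ?thesis using finite_lists_length_le[OF finS] finite_surj by blast
qed

lemma comp_subset0: "(induced_adj G S X)\<^sup>*\<^sup>* x y \<Longrightarrow> x \<in> X \<Longrightarrow> y \<in> X"
  by (induction rule: rtranclp_induct) (auto simp: induced_adj_def)
lemma comp_subset: "x \<in> X \<Longrightarrow> (induced_adj G S X)\<^sup>*\<^sup>* x y \<Longrightarrow> y \<in> X"
  using comp_subset0 by metis

lemma vcomp_sub: "C \<in> vcomponents G S X \<Longrightarrow> C \<subseteq> X"
  unfolding vcomponents_def using comp_subset by blast

lemma vcomp_rep: "C \<in> vcomponents G S X \<Longrightarrow> y \<in> C \<Longrightarrow> C = {z. (induced_adj G S X)\<^sup>*\<^sup>* y z}"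
proof -
  assume "C \<in> vcomponents G S X" "y \<in> C"
  then obtain x where x: "x \<in> X" "C = {z. (induced_adj G S X)\<^sup>*\<^sup>* x z}"
    unfolding vcomponents_def by blast
  then have xy: "(induced_adj G S X)\<^sup>*\<^sup>* x y" using \<open>y \<in> C\<close> by auto
  show ?thesis using x xy adj_rt_sym[OF xy]
    by (auto intro: rtranclp_trans)
qed

lemma vcomp_eq: "C \<in> vcomponents G S X \<Longrightarrow> C' \<in> vcomponents G S X \<Longrightarrow> y \<in> C \<Longrightarrow> y \<in> C' \<Longrightarrow> C = C'"
  using vcomp_rep by metis

lemma vcompI: "x \<in> X \<Longrightarrow> {z. (induced_adj G S X)\<^sup>*\<^sup>* x z} \<in> vcomponents G S X"
  unfolding vcomponents_def by blast

abbreviation Cm where "Cm m \<equiv> carrier G - cayley_ball G S (real m)"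

lemma Cm_eq: "Cm m = {g\<in>carrier G. m < d g}"
  unfolding ball_nat by auto

lemma comp_sphere: "X \<in> vcomponents G S (Cm m) \<Longrightarrow>
  \<exists>c. c \<in> {g\<in>carrier G. d g \<le> Suc m} \<and> X = {y. (induced_adj G S (Cm m))\<^sup>*\<^sup>* c y}"
proof -
  assume X: "X \<in> vcomponents G S (Cm m)"
  then obtain x where x: "x \<in> Cm m" "X = {z. (induced_adj G S (Cm m))\<^sup>*\<^sup>* x z}"
    unfolding vcomponents_def by blast
  have xc: "x \<in> carrier G" "Suc m \<le> d x" using x Cm_eq by auto
  obtain c where c: "c \<in> carrier G" "d c = Suc m"
    "(induced_adj G S {z\<in>carrier G. Suc m \<le> d z \<and> d z \<le> d x})\<^sup>*\<^sup>* c x"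
    using descent[OF xc] by blast
  have "(induced_adj G S (Cm m))\<^sup>*\<^sup>* c x"
    by (rule adj_mono[OF _ c(3)]) (auto simp: Cm_eq)
  then have "(induced_adj G S (Cm m))\<^sup>*\<^sup>* x c" by (rule adj_rt_sym)
  then have "c \<in> X" using x by simp
  then have "X = {y. (induced_adj G S (Cm m))\<^sup>*\<^sup>* c y}" using vcomp_rep[OF X] by blast
  then show ?thesis using c by (intro exI[of _ c]) auto
qed

lemma finite_vcomp: "finite (vcomponents G S (Cm m))"
proof -
  have "vcomponents G S (Cm m) \<subseteq> (\<lambda>c. {y. (induced_adj G S (Cm m))\<^sup>*\<^sup>* c y}) ` {g\<in>carrier G. d g \<le> Suc m}"
    using comp_sphere by blast
  then show ?thesis using finite_ball finite_surj by blast
qed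

lemma sub_inf:
  assumes nm: "n \<le> m" and C: "C \<in> vcomponents G S (Cm n)" and inf: "infinite C"
  shows "\<exists>X \<in> vcomponents G S (Cm m). X \<subseteq> C \<and> infinite X"
proof (rule ccontr)
  assume H: "\<not> ?thesis"
  have "C - cayley_ball G S (real m) \<subseteq> \<Union>{X \<in> vcomponents G S (Cm m). X \<subseteq> C}"
  proof
    fix y assume y: "y \<in> C - cayley_ball G S (real m)"
    have yc: "y \<in> Cm m" using y vcomp_sub[OF C] by auto
    define X where "X = {z. (induced_adj G S (Cm m))\<^sup>*\<^sup>* y z}"
    have XV: "X \<in> vcomponents G S (Cm m)" unfolding X_def by (rule vcompI[OF yc])
    have sub: "Cm m \<subseteq> Cm n" using nm unfolding Cm_eq by auto
    have "X \<subseteq> C"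
    proof
      fix z assume "z \<in> X"
      then have "(induced_adj G S (Cm n))\<^sup>*\<^sup>* y z" unfolding X_def using adj_mono[OF sub] by blast
      then show "z \<in> C" using vcomp_rep[OF C] y by blast
    qed
    moreover have "y \<in> X" unfolding X_def by simp
    ultimately show "y \<in> \<Union>{X \<in> vcomponents G S (Cm m). X \<subseteq> C}" using XV by blast
  qed
  moreover have "finite (\<Union>{X \<in> vcomponents G S (Cm m). X \<subseteq> C})"
    using H finite_vcomp by auto
  ultimately have "finite (C - cayley_ball G S (real m))" by (rule finite_subset)
  moreover have "finite (cayley_ball G S (real m))" using finite_ball ball_nat by simp
  ultimately have "finite C" by (metis Diff_empty Diff_eq_empty_iff finite_Diff2 finite_subset)
  then show False using inf by blast
qed

lemma unique_inf:
  assumes oe: "one_ended G S"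
  shows "\<exists>!C. C \<in> vcomponents G S (Cm n) \<and> infinite C"
proof -
  obtain N where N: "\<forall>n\<ge>N. \<exists>!C. C \<in> vcomponents G S (Cm n) \<and> infinite C"
    using oe unfolding one_ended_def by blast
  define m where "m = max N n"
  obtain X0 where X0: "X0 \<in> vcomponents G S (Cm m)" "infinite X0"
    and X0u: "\<And>X. X \<in> vcomponents G S (Cm m) \<Longrightarrow> infinite X \<Longrightarrow> X = X0"
    using N m_def by (metis max.cobounded1)
  obtain x where x: "x \<in> Cm m" "X0 = {z. (induced_adj G S (Cm m))\<^sup>*\<^sup>* x z}"
    using X0(1) unfolding vcomponents_def by blast
  have sub: "Cm m \<subseteq> Cm n" unfolding m_def Cm_eq by auto
  define C where "C = {z. (induced_adj G S (Cm n))\<^sup>*\<^sup>* x z}"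
  have CV: "C \<in> vcomponents G S (Cm n)" unfolding C_def using x sub by (intro vcompI) auto
  have "X0 \<subseteq> C" unfolding C_def x(2) using adj_mono[OF sub] by blast
  then have Ci: "infinite C" using X0 finite_subset by blast
  show ?thesis
  proof (rule ex1I[of _ C])
    show "C \<in> vcomponents G S (Cm n) \<and> infinite C" using CV Ci by blast
  next
    fix C' assume C': "C' \<in> vcomponents G S (Cm n) \<and> infinite C'"
    obtain X1 where X1: "X1 \<in> vcomponents G S (Cm m)" "X1 \<subseteq> C'" "infinite X1"
      using sub_inf[of n m C'] C' m_def by auto
    obtain X2 where X2: "X2 \<in> vcomponents G S (Cm m)" "X2 \<subseteq> C" "infinite X2"
      using sub_inf[of n m C] CV Ci m_def by auto
    have "X1 = X2" using X0u X1 X2 by metis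
    then obtain y where "y \<in> C'" "y \<in> C" using X1 X2
      by (metis finite.emptyI subsetD ex_in_conv)
    then show "C' = C" using vcomp_eq C' CV by blast
  qed
qed

lemma inf_comp_props:
  assumes oe: "one_ended G S"
  shows "inf_comp G S n \<in> vcomponents G S (Cm n)"
  using theI'[OF unique_inf[OF oe, of n]] unfolding inf_comp_def by blast

end

fun Phi :: "('a, 'b) monoid_scheme \<Rightarrow> ('a \<Rightarrow> 'a \<Rightarrow> int) \<Rightarrow> 'a \<Rightarrow> 'a list \<Rightarrow> int" where
  "Phi G f g [] = 0"
| "Phi G f g (s # w) = f g (g \<otimes>\<^bsub>G\<^esub> s) + Phi G f (g \<otimes>\<^bsub>G\<^esub> s) w"

definition pv :: "('a, 'b) monoid_scheme \<Rightarrow> 'a \<Rightarrow> 'a list \<Rightarrow> nat \<Rightarrow> 'a" where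
  "pv G g w i = g \<otimes>\<^bsub>G\<^esub> word_eval G (take i w)"

context group begin

lemma Phi_append: "g \<in> carrier G \<Longrightarrow> set u \<subseteq> carrier G \<Longrightarrow>
  Phi G f g (u @ v) = Phi G f g u + Phi G f (g \<otimes> word_eval G u) v"
proof (induction u arbitrary: g)
  case Nil then show ?case by simp
next
  case (Cons s u)
  have "g \<otimes> s \<otimes> word_eval G u = g \<otimes> (s \<otimes> word_eval G u)"
    using Cons by (simp add: m_assoc word_eval_closed)
  then show ?case using Cons by simp
qed

lemma pv_closed: "g \<in> carrier G \<Longrightarrow> set w \<subseteq> carrier G \<Longrightarrow> pv G g w i \<in> carrier G"
  unfolding pv_def by (metis m_closed word_eval_closed set_take_subset subset_trans)

lemma Phi_sum: "g \<in> carrier G \<Longrightarrow> set w \<subseteq> carrier G \<Longrightarrow>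
  Phi G f g w = (\<Sum>i<length w. f (pv G g w i) (pv G g w (Suc i)))"
proof (induction w arbitrary: g)
  case Nil then show ?case by simp
next
  case (Cons s w)
  have pv0: "pv G g (s # w) 0 = g" using Cons by (simp add: pv_def)
  have pvS: "pv G g (s # w) (Suc i) = pv G (g \<otimes> s) w i" for i
    using Cons unfolding pv_def
    by (simp add: m_assoc word_eval_closed) (metis m_assoc word_eval_closed set_take_subset subset_trans list.set_intros)
  have IH: "Phi G f (g \<otimes> s) w = (\<Sum>i<length w. f (pv G (g \<otimes> s) w i) (pv G (g \<otimes> s) w (Suc i)))"
    using Cons by auto
  show ?case
    using Cons(2,3) by (simp only: length_Cons sum.lessThan_Suc_shift pv0 pvS Phi.simps IH) (simp add: pv_def)
qed

end



locale sep = cay +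
  fixes n :: nat and r :: real and U :: "'a set" and x :: 'a
  assumes U: "U \<in> vcomponents G S (Cm n)"
    and rR: "\<forall>w\<in>R. real (length w) / 2 < r"
    and xA: "x \<in> cayley_ball G S (real n + r) \<inter> U"
begin

abbreviation A where "A \<equiv> cayley_ball G S (real n + r) \<inter> U"
definition C1 where "C1 = {z. (induced_adj G S A)\<^sup>*\<^sup>* x z}"
definition Bn where "Bn = {g\<in>carrier G. d g \<le> n}"
definition phi :: "'a \<Rightarrow> 'a \<Rightarrow> int" where
  "phi a b = (if a \<in> Bn \<and> b \<in> C1 then 1 else if a \<in> C1 \<and> b \<in> Bn then -1 else 0)"
definition chi :: "'a \<Rightarrow> int" where "chi a = (if a \<in> C1 then 1 else 0)"

lemma U_sub: "U \<subseteq> Cm n" using vcomp_sub[OF U] .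
lemma U_sub': "u \<in> U \<Longrightarrow> u \<in> carrier G \<and> n < d u" using U_sub Cm_eq by auto

lemma U_conn: "a \<in> U \<Longrightarrow> b \<in> U \<Longrightarrow> (induced_adj G S (Cm n))\<^sup>*\<^sup>* a b"
  using vcomp_rep[OF U] by blast

lemma U_closed: "a \<in> U \<Longrightarrow> b \<in> carrier G \<Longrightarrow> n < d b \<Longrightarrow> cayley_adj G S a b \<or> cayley_adj G S b a \<Longrightarrow> b \<in> U"
proof -
  assume a: "a \<in> U" and b: "b \<in> carrier G" "n < d b" and ab: "cayley_adj G S a b \<or> cayley_adj G S b a"
  have "induced_adj G S (Cm n) a b" unfolding induced_adj_def using U_sub a b ab Cm_eq by auto
  then have "(induced_adj G S (Cm n))\<^sup>*\<^sup>* a b" by blast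
  then show "b \<in> U" using vcomp_rep[OF U a] by blast
qed

lemma C1_A: "C1 \<subseteq> A" unfolding C1_def using comp_subset[OF xA] by blast
lemma C1_Bn: "C1 \<inter> Bn = {}" using C1_A U_sub' unfolding Bn_def by fastforce

lemma inA: "z \<in> carrier G \<Longrightarrow> real (d z) \<le> real n + r \<Longrightarrow> z \<in> U \<Longrightarrow> z \<in> A"
  unfolding cayley_ball_def by auto

lemma phi_anti: "phi a b + phi b a = 0"
  using C1_Bn unfolding phi_def by auto

lemma relator_eval: "w \<in> R \<Longrightarrow> word_eval G w = \<one>"
proof -
  assume w: "w \<in> R"
  have "word_step G S R ([] @ []) ([] @ w @ [])" by (rule word_step.ins_relator[OF w])
  then have "word_step G S R [] w" by simp
  then have "equivclp (word_step G S R) w []" unfolding equivclp_def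
    by (meson r_into_rtranclp symclpI2)
  then show ?thesis using pres_eq R_S[OF w] by blast
qed

lemma relator_Phi:
  assumes g: "g \<in> carrier G" and w: "w \<in> R"
  shows "Phi G phi g w = 0"
proof -
  define L where "L = length w"
  define p where "p i = pv G g w i" for i
  have wS: "set w \<subseteq> S" using R_S[OF w] .
  have wC: "set w \<subseteq> carrier G" using wS S_carr by blast
  have ev: "word_eval G w = \<one>" using relator_eval[OF w] .
   have pc: "p i \<in> carrier G" for i unfolding p_def using pv_closed[OF g wC] .
 have pL: "p L = g" unfolding p_def pv_def L_def using ev g by simp
  have p0: "p 0 = g" unfolding p_def pv_def using g by simp
  have pS: "p (Suc i) = p i \<otimes> (w ! i)" if "i < L" for i
  proof -
    have t: "take (Suc i) w = take i w @ [w ! i]" using that unfolding L_def by (rule take_Suc_conv_app_nth)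
    have "w ! i \<in> set w" using that L_def by simp
    then have wi: "w ! i \<in> carrier G" using wC by blast
    have st: "set (take i w) \<subseteq> carrier G" using wC set_take_subset by (metis subset_trans)
    have e: "word_eval G (take (Suc i) w) = word_eval G (take i w) \<otimes> (w ! i)"
      unfolding t using word_eval_append[OF st, of "[w ! i]"] wi by simp
    have "g \<otimes> (word_eval G (take i w) \<otimes> (w ! i)) = g \<otimes> word_eval G (take i w) \<otimes> (w ! i)"
      using g wi word_eval_closed[OF st] by (simp add: m_assoc)
    then show ?thesis unfolding p_def pv_def e by simp
  qed
  have wiS: "w ! i \<in> S" if "i < L" for i
  proof -
    have "w ! i \<in> set w" using that L_def by simp
    then show ?thesis using wS by blast
  qed
  have tS: "set (take j w) \<subseteq> S" for j by (rule subset_trans[OF set_take_subset wS])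
  have dS: "set (drop j w) \<subseteq> S" for j by (rule subset_trans[OF set_drop_subset wS])
  have tC: "set (take j w) \<subseteq> carrier G" for j by (rule subset_trans[OF tS S_carr])
  have dC: "set (drop j w) \<subseteq> carrier G" for j by (rule subset_trans[OF dS S_carr])
  have tE: "word_eval G (take j w) \<in> carrier G" for j by (rule word_eval_closed[OF tC])
  have dE: "word_eval G (drop j w) \<in> carrier G" for j by (rule word_eval_closed[OF dC])
  have seg: "\<exists>u. set u \<subseteq> S \<and> length u = (if i \<le> k then k - i else L - i + k) \<and> p i \<otimes> word_eval G u = p k"
    if "i \<le> L" "k \<le> L" for i k
  proof (cases "i \<le> k")
    case True
    define u where "u = drop i (take k w)"
    have tt: "take i (take k w) = take i w" using True by (simp add: min_absorb1)
    have "take k w = take i w @ u" unfolding u_def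
      using append_take_drop_id[of i "take k w"] tt by simp
    then have "word_eval G (take k w) = word_eval G (take i w) \<otimes> word_eval G u"
      using word_eval_append[of "take i w" u] tC[of i] tC[of k] by simp
    moreover have uS: "set u \<subseteq> S" unfolding u_def
      by (rule subset_trans[OF set_drop_subset tS])
    moreover have "length u = k - i" unfolding u_def using that L_def by simp
    moreover have "word_eval G u \<in> carrier G"
      using uS S_carr word_eval_closed by (metis subset_trans)
    ultimately have "p i \<otimes> word_eval G u = p k" unfolding p_def pv_def using g tE[of i]
      by (simp add: m_assoc)
    then show ?thesis using True uS \<open>length u = k - i\<close> by auto
  next
    case False
    define u where "u = drop i w @ take k w"
    have uS: "set u \<subseteq> S" unfolding u_def using dS tS by simp
    have e1: "word_eval G u = word_eval G (drop i w) \<otimes> word_eval G (take k w)"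
      unfolding u_def using word_eval_append[OF dC tC] .
    have e2: "word_eval G (take i w) \<otimes> word_eval G (drop i w) = \<one>"
      using ev word_eval_append[OF tC dC, of i i] by simp
    have "length u = L - i + k" unfolding u_def using that L_def by simp
    have "p i \<otimes> word_eval G u = g \<otimes> (word_eval G (take i w) \<otimes> word_eval G (drop i w)) \<otimes> word_eval G (take k w)"
      unfolding p_def pv_def e1 using g tE dE by (simp add: m_assoc)
    also have "\<dots> = p k" unfolding e2 p_def pv_def using g by simp
    finally show ?thesis using uS \<open>length u = L - i + k\<close> False by auto
  qed
  have dist: "real (d (p i)) \<le> real n + r" if ij: "i \<le> L" "j \<le> L" "p j \<in> Bn" for i j
  proof -
    obtain u1 where u1: "set u1 \<subseteq> S" "length u1 = (if j \<le> i then i - j else L - j + i)" "p j \<otimes> word_eval G u1 = p i"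
      using seg[of j i] ij by blast
    obtain u2 where u2: "set u2 \<subseteq> S" "length u2 = (if i \<le> j then j - i else L - i + j)" "p i \<otimes> word_eval G u2 = p j"
      using seg[of i j] ij by blast
    have a: "d (p i) \<le> d (p j) + length u1" using d_word[OF pc[of j] u1(1)] u1(3) by simp
    have b: "d (p i) \<le> d (p j) + length u2" using d_word'[OF pc[of i] u2(1)] u2(3) by simp
    have "length u1 + length u2 \<le> L" using u1(2) u2(2) ij by auto
    then have "2 * d (p i) \<le> 2 * n + L" using a b ij(3) unfolding Bn_def by auto
    then have "real (d (p i)) \<le> real n + real L / 2" by linarith
    moreover have "real L / 2 < r" using rR w L_def by auto
    ultimately show ?thesis by linarith
  qed
  have sumform: "Phi G phi g w = (\<Sum>i<L. phi (p i) (p (Suc i)))"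
    unfolding p_def L_def using Phi_sum[OF g wC] .
  show ?thesis
  proof (cases "\<exists>j\<le>L. p j \<in> Bn")
    case True
    then obtain j where j: "j \<le> L" "p j \<in> Bn" by blast
    have edge: "phi (p i) (p (Suc i)) = chi (p (Suc i)) - chi (p i)" if i: "i < L" for i
    proof -
      define a where "a = p i"
      define b where "b = p (Suc i)"
      have ab: "cayley_adj G S a b" unfolding cayley_adj_def a_def b_def using pc[of i] pS[OF i] wiS[OF i] by auto
      have da: "real (d a) \<le> real n + r" unfolding a_def using dist[of i j] i j by simp
      have db: "real (d b) \<le> real n + r" unfolding b_def using dist[of "Suc i" j] i j by simp
      have ac: "a \<in> carrier G" "b \<in> carrier G" unfolding a_def b_def using pc by simp_all
      have dj: "z \<in> C1 \<Longrightarrow> z \<notin> Bn" for z using C1_Bn by blast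
      have C1U: "z \<in> C1 \<Longrightarrow> z \<in> U" for z using C1_A by blast
      have C1A: "z \<in> C1 \<Longrightarrow> z \<in> A" for z using C1_A by blast
      have 1: "b \<in> Bn" if h: "a \<in> C1" "b \<notin> C1"
      proof (rule ccontr)
        assume "b \<notin> Bn"
        then have nb: "n < d b" using ac unfolding Bn_def by auto
        have "b \<in> U" using U_closed[OF C1U[OF h(1)] ac(2) nb] ab by blast
        then have bA: "b \<in> A" by (rule inA[OF ac(2) db])
        have "induced_adj G S A a b" unfolding induced_adj_def using C1A[OF h(1)] bA ab by blast
        moreover have "(induced_adj G S A)\<^sup>*\<^sup>* x a" using h(1) unfolding C1_def by simp
        ultimately have "(induced_adj G S A)\<^sup>*\<^sup>* x b" by (rule rtranclp.rtrancl_into_rtrancl[rotated])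
        then have "b \<in> C1" unfolding C1_def by simp
        then show False using h by blast
      qed
      have 2: "a \<in> Bn" if h: "b \<in> C1" "a \<notin> C1"
      proof (rule ccontr)
        assume "a \<notin> Bn"
        then have na: "n < d a" using ac unfolding Bn_def by auto
        have "a \<in> U" using U_closed[OF C1U[OF h(1)] ac(1) na] ab by blast
        then have aA: "a \<in> A" by (rule inA[OF ac(1) da])
        have "induced_adj G S A b a" unfolding induced_adj_def using C1A[OF h(1)] aA ab by blast
        moreover have "(induced_adj G S A)\<^sup>*\<^sup>* x b" using h(1) unfolding C1_def by simp
        ultimately have "(induced_adj G S A)\<^sup>*\<^sup>* x a" by (rule rtranclp.rtrancl_into_rtrancl[rotated])
        then have "a \<in> C1" unfolding C1_def by simp
        then show False using h by blast
      qed
      show ?thesis unfolding a_def[symmetric] b_def[symmetric] phi_def chi_def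
        by (cases "a \<in> C1"; cases "b \<in> C1") (use 1 2 dj in auto)
    qed
    have "Phi G phi g w = (\<Sum>i<L. chi (p (Suc i)) - chi (p i))"
      unfolding sumform using edge by (intro sum.cong) auto
    also have "\<dots> = chi (p L) - chi (p 0)" by (rule sum_lessThan_telescope)
    finally show ?thesis using pL p0 by simp
  next
    case False
    have "phi (p i) (p (Suc i)) = 0" if "i < L" for i
    proof -
      have "p i \<notin> Bn" "p (Suc i) \<notin> Bn" using False that by auto
      then show ?thesis unfolding phi_def by simp
    qed
    then show ?thesis unfolding sumform by simp
  qed
qed


lemma Phi_bt: "g \<in> carrier G \<Longrightarrow> s \<in> S \<Longrightarrow> Phi G phi g [s, inv s] = 0"
proof -
  assume g: "g \<in> carrier G" and s: "s \<in> S"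
  have sc: "s \<in> carrier G" using s S_carr by blast
  have "g \<otimes> s \<otimes> inv s = g" using g sc by (simp add: m_assoc)
  then show ?thesis using phi_anti[of g "g \<otimes> s"] by simp
qed

lemma Phi_ins:
  assumes g: "g \<in> carrier G" and uS: "set u \<subseteq> S" and mS: "set m \<subseteq> S"
    and ev: "word_eval G m = \<one>" and z: "\<forall>h\<in>carrier G. Phi G phi h m = 0"
  shows "Phi G phi g (u @ m @ v) = Phi G phi g (u @ v)"
proof -
  have uC: "set u \<subseteq> carrier G" using uS S_carr by (rule subset_trans)
  have mC: "set m \<subseteq> carrier G" using mS S_carr by (rule subset_trans)
  define g' where "g' = g \<otimes> word_eval G u"
  have g'c: "g' \<in> carrier G" unfolding g'_def using g word_eval_closed[OF uC] by simp
  have "Phi G phi g (u @ m @ v) = Phi G phi g u + Phi G phi g' (m @ v)"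
    unfolding g'_def by (rule Phi_append[OF g uC])
  also have "Phi G phi g' (m @ v) = Phi G phi g' m + Phi G phi (g' \<otimes> word_eval G m) v"
    by (rule Phi_append[OF g'c mC])
  also have "\<dots> = Phi G phi g' v" using z g'c ev by simp
  also have "Phi G phi g u + Phi G phi g' v = Phi G phi g (u @ v)"
    unfolding g'_def by (rule Phi_append[OF g uC, symmetric])
  finally show ?thesis .
qed

lemma step_inv:
  "word_step G S R a b \<Longrightarrow> (set a \<subseteq> S \<longleftrightarrow> set b \<subseteq> S) \<and>
     (set a \<subseteq> S \<longrightarrow> (\<forall>g\<in>carrier G. Phi G phi g a = Phi G phi g b))"
proof (induction rule: word_step.induct)
  case (ins_backtrack s u v)
  have sS: "inv s \<in> S" using S_inv[OF ins_backtrack] .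
  have mS: "set [s, inv s] \<subseteq> S" using ins_backtrack sS by simp
  have sc: "s \<in> carrier G" using ins_backtrack S_carr by blast
  have ev: "word_eval G [s, inv s] = \<one>" using sc by simp
  have z: "\<forall>h\<in>carrier G. Phi G phi h [s, inv s] = 0" using Phi_bt ins_backtrack by blast
  show ?case
  proof
    show "set (u @ v) \<subseteq> S \<longleftrightarrow> set (u @ [s, inv s] @ v) \<subseteq> S" using mS by auto
    show "set (u @ v) \<subseteq> S \<longrightarrow> (\<forall>g\<in>carrier G. Phi G phi g (u @ v) = Phi G phi g (u @ [s, inv s] @ v))"
      using Phi_ins[OF _ _ mS ev z] by simp
  qed
next
  case (ins_relator w u v)
  have mS: "set w \<subseteq> S" using R_S[OF ins_relator] .
  have ev: "word_eval G w = \<one>" using relator_eval[OF ins_relator] .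
  have z: "\<forall>h\<in>carrier G. Phi G phi h w = 0" using relator_Phi ins_relator by blast
  show ?case
  proof
    show "set (u @ v) \<subseteq> S \<longleftrightarrow> set (u @ w @ v) \<subseteq> S" using mS by auto
    show "set (u @ v) \<subseteq> S \<longrightarrow> (\<forall>g\<in>carrier G. Phi G phi g (u @ v) = Phi G phi g (u @ w @ v))"
      using Phi_ins[OF _ _ mS ev z] by simp
  qed
qed

lemma equiv_inv:
  assumes "equivclp (word_step G S R) w w'" and "set w \<subseteq> S"
  shows "set w' \<subseteq> S \<and> (\<forall>g\<in>carrier G. Phi G phi g w = Phi G phi g w')"
  using assms(1)[unfolded equivclp_def] assms(2)
proof (induction rule: rtranclp_induct)
  case base then show ?case by simp
next
  case (step y z)
  then have yS: "set y \<subseteq> S" and yE: "\<forall>g\<in>carrier G. Phi G phi g w = Phi G phi g y" by auto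
  have "word_step G S R y z \<or> word_step G S R z y" using step(2) unfolding symclp_def .
  then show ?case
  proof
    assume "word_step G S R y z" then show ?thesis using step_inv[of y z] yS yE by auto
  next
    assume "word_step G S R z y" then show ?thesis using step_inv[of z y] yS yE by auto
  qed
qed

lemma closed_Phi: "set w \<subseteq> S \<Longrightarrow> word_eval G w = \<one> \<Longrightarrow> g \<in> carrier G \<Longrightarrow> Phi G phi g w = 0"
  using equiv_inv[of w "[]"] pres_eq[of w] by auto

lemma path_word:
  assumes "(induced_adj G S X)\<^sup>*\<^sup>* a b" and aX: "a \<in> X" and XC: "X \<subseteq> carrier G"
  shows "\<exists>u. set u \<subseteq> S \<and> a \<otimes> word_eval G u = b \<and> (\<forall>i\<le>length u. pv G a u i \<in> X)"
  using assms(1)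
proof (induction rule: rtranclp_induct)
  case base
  have "pv G a [] i = a" for i using aX XC unfolding pv_def by auto
  then show ?case using aX by (intro exI[of _ "[]"]) (use XC aX in auto)
next
  case (step y z)
  obtain u where u: "set u \<subseteq> S" "a \<otimes> word_eval G u = y" "\<forall>i\<le>length u. pv G a u i \<in> X"
    using step by blast
  have yz: "y \<in> X" "z \<in> X" "cayley_adj G S y z \<or> cayley_adj G S z y"
    using step(2) unfolding induced_adj_def by auto
  have yc: "y \<in> carrier G" "z \<in> carrier G" using yz XC by auto
  obtain t where t: "t \<in> S" "y \<otimes> t = z"
  proof (cases "cayley_adj G S y z")
    case True then show ?thesis using that unfolding cayley_adj_def by blast
  next
    case False
    then obtain t' where t': "t' \<in> S" "z \<otimes> t' = y" using yz unfolding cayley_adj_def by blast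
    have "t' \<in> carrier G" using t' S_carr by blast
    then have "y \<otimes> inv t' = z" using t' yc by (auto simp: m_assoc)
    then show ?thesis using that S_inv[OF t'(1)] by blast
  qed
  have uC: "set u \<subseteq> carrier G" using u(1) S_carr by (rule subset_trans)
  have tc: "t \<in> carrier G" using t S_carr by blast
  have ac: "a \<in> carrier G" using aX XC by blast
  have ev: "word_eval G (u @ [t]) = word_eval G u \<otimes> t"
    using word_eval_append[OF uC, of "[t]"] tc by simp
  have e2: "a \<otimes> word_eval G (u @ [t]) = z"
    unfolding ev using ac tc word_eval_closed[OF uC] u(2) t(2) by (simp add: m_assoc[symmetric])
  have "pv G a (u @ [t]) i \<in> X" if "i \<le> length (u @ [t])" for i
  proof (cases "i \<le> length u")
    case True
    then have "pv G a (u @ [t]) i = pv G a u i" unfolding pv_def by simp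
    then show ?thesis using u(3) True by simp
  next
    case False
    then have "i = Suc (length u)" using that by simp
    then have "pv G a (u @ [t]) i = z" unfolding pv_def using e2 by simp
    then show ?thesis using yz by simp
  qed
  then show ?case using u(1) t(1) e2 by (intro exI[of _ "u @ [t]"]) auto
qed

lemma Phi_zero: "g \<in> carrier G \<Longrightarrow> set u \<subseteq> S \<Longrightarrow>
   (\<forall>i<length u. phi (pv G g u i) (pv G g u (Suc i)) = 0) \<Longrightarrow> Phi G phi g u = 0"
proof -
  assume g: "g \<in> carrier G" and u: "set u \<subseteq> S" and z: "\<forall>i<length u. phi (pv G g u i) (pv G g u (Suc i)) = 0"
  have uC: "set u \<subseteq> carrier G" using u S_carr by (rule subset_trans)
  show ?thesis unfolding Phi_sum[OF g uC] using z by simp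
qed


lemma transfer:
  assumes "(induced_adj G S T)\<^sup>*\<^sup>* a b" and bA: "b \<in> A"
    and T: "\<And>q. q \<in> T \<Longrightarrow> q \<in> carrier G \<and> n < d q \<and> real (d q) \<le> real n + r"
  shows "a \<in> A \<and> (induced_adj G S A)\<^sup>*\<^sup>* a b"
  using assms(1)
proof (induction rule: converse_rtranclp_induct)
  case base then show ?case using bA by simp
next
  case (step y z)
  have zA: "z \<in> A" using step by blast
  have yT: "y \<in> T" and adj: "cayley_adj G S y z \<or> cayley_adj G S z y"
    using step(1) unfolding induced_adj_def by auto
  have y: "y \<in> carrier G" "n < d y" "real (d y) \<le> real n + r" using T[OF yT] by auto
  have zU: "z \<in> U" using zA by blast
  have "y \<in> U" using U_closed[OF zU y(1) y(2)] adj by blast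
  then have yA: "y \<in> A" by (rule inA[OF y(1) y(3)])
  have "induced_adj G S A y z" unfolding induced_adj_def using yA zA adj by blast
  then show ?case using yA step by (meson converse_rtranclp_into_rtranclp)
qed

lemma reach:
  assumes zA: "z \<in> A"
  shows "\<exists>c k s. c \<in> A \<and> (induced_adj G S A)\<^sup>*\<^sup>* c z \<and> k \<in> carrier G \<and> s \<in> S \<and> d k = n \<and> k \<otimes> s = c"
proof -
  have zU: "z \<in> U" using zA by blast
  have zc: "z \<in> carrier G" "n < d z" using U_sub'[OF zU] by auto
  have dz: "real (d z) \<le> real n + r" using zA unfolding cayley_ball_def by auto
  obtain c where c: "c \<in> carrier G" "d c = Suc n"
    "(induced_adj G S {q\<in>carrier G. Suc n \<le> d q \<and> d q \<le> d z})\<^sup>*\<^sup>* c z"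
    using descent[OF zc(1), of "Suc n"] zc by auto
  have tr: "c \<in> A \<and> (induced_adj G S A)\<^sup>*\<^sup>* c z"
  proof (rule transfer[OF c(3) zA])
    fix q assume "q \<in> {q\<in>carrier G. Suc n \<le> d q \<and> d q \<le> d z}"
    then show "q \<in> carrier G \<and> n < d q \<and> real (d q) \<le> real n + r" using dz by auto
  qed
  obtain k s where ks: "k \<in> carrier G" "s \<in> S" "d k = n" "k \<otimes> s = c"
    using d_pred[OF c(1) c(2)] by blast
  show ?thesis using tr ks by blast
qed

lemma ball_path: "k \<in> Bn \<Longrightarrow> (induced_adj G S Bn)\<^sup>*\<^sup>* \<one> k"
proof -
  assume k: "k \<in> Bn"
  then have kc: "k \<in> carrier G" unfolding Bn_def by simp
  obtain c where c: "c \<in> carrier G" "d c = 0" "(induced_adj G S {q\<in>carrier G. 0 \<le> d q \<and> d q \<le> d k})\<^sup>*\<^sup>* c k"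
    using descent[OF kc, of 0] by auto
  have "c = \<one>" using d_zero c by blast
  moreover have "{q\<in>carrier G. 0 \<le> d q \<and> d q \<le> d k} \<subseteq> Bn" using k unfolding Bn_def by auto
  ultimately show ?thesis using adj_mono c(3) by metis
qed

lemma main_conn: assumes yA: "y \<in> A" shows "(induced_adj G S A)\<^sup>*\<^sup>* x y"
proof (rule ccontr)
  assume nxy: "\<not> (induced_adj G S A)\<^sup>*\<^sup>* x y"
  obtain c k1 s1 where c: "c \<in> A" "(induced_adj G S A)\<^sup>*\<^sup>* c x" "k1 \<in> carrier G" "s1 \<in> S" "d k1 = n" "k1 \<otimes> s1 = c"
    using reach[OF xA] by blast
  obtain e k2 s2 where e: "e \<in> A" "(induced_adj G S A)\<^sup>*\<^sup>* e y" "k2 \<in> carrier G" "s2 \<in> S" "d k2 = n" "k2 \<otimes> s2 = e"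
    using reach[OF yA] by blast
  have cC1: "c \<in> C1" unfolding C1_def using adj_rt_sym[OF c(2)] by simp
  have eC1: "e \<notin> C1"
  proof
    assume "e \<in> C1"
    then have "(induced_adj G S A)\<^sup>*\<^sup>* x e" unfolding C1_def by simp
    then show False using e(2) nxy by (meson rtranclp_trans)
  qed
  have dj: "z \<in> C1 \<Longrightarrow> z \<notin> Bn" for z using C1_Bn by blast
  have k1B: "k1 \<in> Bn" "k2 \<in> Bn" unfolding Bn_def using c e by auto
  have cU: "c \<in> U" "e \<in> U" using c e by auto
  have CmC: "Cm n \<subseteq> carrier G" by blast
  have cCm: "c \<in> Cm n" using cU U_sub by blast
  obtain u1 where u1: "set u1 \<subseteq> S" "c \<otimes> word_eval G u1 = e" "\<forall>i\<le>length u1. pv G c u1 i \<in> Cm n"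
    using path_word[OF U_conn[OF cU] cCm CmC] by blast
  have BnC: "Bn \<subseteq> carrier G" unfolding Bn_def by blast
  have "(induced_adj G S Bn)\<^sup>*\<^sup>* k2 k1"
    using adj_rt_sym[OF ball_path[OF k1B(2)]] ball_path[OF k1B(1)] by (rule rtranclp_trans)
  then obtain u2 where u2: "set u2 \<subseteq> S" "k2 \<otimes> word_eval G u2 = k1" "\<forall>i\<le>length u2. pv G k2 u2 i \<in> Bn"
    using path_word[OF _ k1B(2) BnC] by blast
  have notB: "q \<in> Cm n \<Longrightarrow> q \<notin> Bn" for q unfolding Bn_def Cm_eq by auto
  have ce: "c \<in> carrier G" "e \<in> carrier G" using cU U_sub' by auto
  have P1: "Phi G phi c u1 = 0"
  proof (rule Phi_zero[OF ce(1) u1(1)], intro allI impI)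
    fix i assume "i < length u1"
    then have "pv G c u1 i \<notin> Bn" "pv G c u1 (Suc i) \<notin> Bn" using u1(3) notB by auto
    then show "phi (pv G c u1 i) (pv G c u1 (Suc i)) = 0" unfolding phi_def by simp
  qed
  have P2: "Phi G phi k2 u2 = 0"
  proof (rule Phi_zero[OF e(3) u2(1)], intro allI impI)
    fix i assume "i < length u2"
    then have "pv G k2 u2 i \<in> Bn" "pv G k2 u2 (Suc i) \<in> Bn" using u2(3) by auto
    then have "pv G k2 u2 i \<notin> C1" "pv G k2 u2 (Suc i) \<notin> C1" using dj by auto
    then show "phi (pv G k2 u2 i) (pv G k2 u2 (Suc i)) = 0" unfolding phi_def by simp
  qed
  have s2c: "s2 \<in> carrier G" "s1 \<in> carrier G" using e(4) c(4) S_carr by auto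
  have ek2: "e \<otimes> inv s2 = k2" using e(6)[symmetric] e(3) s2c by (simp add: m_assoc)
  define W where "W = s1 # (u1 @ (inv s2 # u2))"
  have WS: "set W \<subseteq> S" unfolding W_def using u1(1) u2(1) c(4) S_inv[OF e(4)] by auto
  have u1C: "set u1 \<subseteq> carrier G" using u1(1) S_carr by (rule subset_trans)
  have u2C: "set u2 \<subseteq> carrier G" using u2(1) S_carr by (rule subset_trans)
  have ev1: "word_eval G u1 \<in> carrier G" "word_eval G u2 \<in> carrier G"
    using word_eval_closed[OF u1C] word_eval_closed[OF u2C] by auto
  have evW: "word_eval G W = s1 \<otimes> (word_eval G u1 \<otimes> (inv s2 \<otimes> word_eval G u2))"
    unfolding W_def using word_eval_append[OF u1C, of "inv s2 # u2"] u2C s2c by simp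
  have "k1 \<otimes> word_eval G W = ((k1 \<otimes> s1) \<otimes> word_eval G u1) \<otimes> inv s2 \<otimes> word_eval G u2"
    unfolding evW using c(3) s2c ev1 by (simp add: m_assoc)
  also have "\<dots> = k1" unfolding c(6) u1(2) ek2 u2(2) by simp
  finally have "k1 \<otimes> word_eval G W = k1" .
  then have evW1: "word_eval G W = \<one>"
    using c(3) word_eval_closed[OF subset_trans[OF WS S_carr]] by simp
  have "Phi G phi k1 W = phi k1 c + Phi G phi c (u1 @ (inv s2 # u2))"
    unfolding W_def c(6)[symmetric] by simp
  also have "Phi G phi c (u1 @ (inv s2 # u2)) = Phi G phi c u1 + Phi G phi e (inv s2 # u2)"
    using Phi_append[OF ce(1) u1C, of phi "inv s2 # u2"] u1(2) by simp
  also have "Phi G phi e (inv s2 # u2) = phi e k2 + Phi G phi k2 u2" using ek2 by simp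
  finally have "Phi G phi k1 W = phi k1 c + phi e k2" using P1 P2 by simp
  moreover have "phi k1 c = 1" unfolding phi_def using k1B cC1 by simp
  moreover have "phi e k2 = 0" unfolding phi_def using eC1 dj[of k2] k1B by auto
  moreover have "Phi G phi k1 W = 0" by (rule closed_Phi[OF WS evW1 c(3)])
  ultimately show False by simp
qed

end

theorem mainTheorem1:
  fixes G (structure) and S :: "'a set" and R :: "'a list set" and r :: real
  assumes "group G"
    and "finite S" and "finite R"
    and "is_presentation G S R"
    and "one_ended G S"
    and "0 < r"
    and "\<forall>w\<in>R. real (length w) / 2 < r"
  shows "\<forall>n::nat. connected_vset G S (cayley_ball G S (real n + r) \<inter> inf_comp G S n)"
proof
  fix n :: nat
  interpret cay G S R using assms(1,2,4) by (simp add: cay_def cay_axioms_def)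
  have U: "inf_comp G S n \<in> vcomponents G S (carrier G - cayley_ball G S (real n))"
    by (rule inf_comp_props[OF assms(5)])
  show "connected_vset G S (cayley_ball G S (real n + r) \<inter> inf_comp G S n)"
    unfolding connected_vset_def
  proof (intro ballI)
    fix x y assume x: "x \<in> cayley_ball G S (real n + r) \<inter> inf_comp G S n"
      and y: "y \<in> cayley_ball G S (real n + r) \<inter> inf_comp G S n"
    interpret sep G S R n r "inf_comp G S n" x
      using U assms(7) x by unfold_locales auto
    show "(induced_adj G S (cayley_ball G S (real n + r) \<inter> inf_comp G S n))\<^sup>*\<^sup>* x y"
      by (rule main_conn[OF y])
  qed
qed

end
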